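(* Let $3\le s\le t\le u$ be integers. (i) If $4\le s\le t\le u$, then $S(3;s,t,u)\ge stu-tu-u-1$. (ii) If either $3=t<u$ or $3<t\le u$, then $S(3;3,t,u)>2tu-u-1$.
   Context: For an integer $k\ge 3$, let $\mathcal{L}(k)$ denote the equation $x_1+x_2+\cdots+x_{k-1}=x_k$ in positive integer variables (the $x_i$ need not be distinct). For $N\ge1$, write $[1,N]=\{1,2,\dots,N\}$. For integers $r\ge1$ and $k_0,\dots,k_{r-1}\ge 3$, the generalized Schur number $S(r;k_0,\dots,k_{r-1})$ is the least positive integer $N$ such that for every coloring $\Delta:[1,N]\to\{0,1,\dots,r-1\}$ there exist some $i\in\{0,\dots,r-1\}$ and positive integers $x_1,\dots,x_{k_i}\in[1,N]$ satisfying $\mathcal{L}(k_i)$ with $\Delta(x_1)=\cdots=\Delta(x_{k_i})=i$. Thus $S(3;s,t,u)$ is the least $N$ such that every 3-coloring of $[1,N]$ has a monochromatic solution to $\mathcal{L}(s)$ in the first color, to $\mathcal{L}(t)$ in the second color, or to $\mathcal{L}(u)$ in the third color. *)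

theory Defs
  imports Main "HOL-Library.Extended_Nat"
begin

text \<open>Colour i (i < length ks) is required to avoid monochromatic solutions of
  x_1 + ... + x_{k-1} = x_k with k = ks ! i.  A solution is given by a function
  x on the indices 1..k.\<close>

definition mono_sol :: "nat \<Rightarrow> (nat \<Rightarrow> nat) \<Rightarrow> nat list \<Rightarrow> bool" where
  "mono_sol N \<Delta> ks \<longleftrightarrow>
     (\<exists>i < length ks. \<exists>x :: nat \<Rightarrow> nat.
        (\<forall>j \<in> {1..ks ! i}. x j \<in> {1..N} \<and> \<Delta> (x j) = i) \<and>
        (\<Sum>j = 1..ks ! i - 1. x j) = x (ks ! i))"

definition schur_prop :: "nat list \<Rightarrow> nat \<Rightarrow> bool" where
  "schur_prop ks N \<longleftrightarrow>
     (\<forall>\<Delta> :: nat \<Rightarrow> nat. (\<forall>n \<in> {1..N}. \<Delta> n < length ks) \<longrightarrow> mono_sol N \<Delta> ks)"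

text \<open>Generalized Schur number S(r; k_0,...,k_{r-1}) with r = length ks:
  least positive N with the property; \<infinity> if there is none.\<close>
definition schur :: "nat list \<Rightarrow> enat" where
  "schur ks = (INF N \<in> {N. N \<ge> 1 \<and> schur_prop ks N}. enat N)"

end

theory Submission
  imports Defs
begin


definition sfree :: "nat \<Rightarrow> nat set \<Rightarrow> bool" where
  "sfree n A \<longleftrightarrow> (\<forall>x. (\<forall>j\<in>{1..n}. x j \<in> A) \<longrightarrow> (\<Sum>j=1..n. x j) \<notin> A)"

lemma sfreeI:
  assumes "\<And>x. (\<forall>j\<in>{1..n}. x j \<in> A) \<Longrightarrow> (\<Sum>j=1..n. x j) \<in> A \<Longrightarrow> False"
  shows "sfree n A"
  using assms unfolding sfree_def by blast

lemma sfree_mono: "sfree n B \<Longrightarrow> A \<subseteq> B \<Longrightarrow> sfree n A"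
  unfolding sfree_def by blast

lemma three:
  fixes A0 A1 A2 :: "nat set"
  assumes cov: "\<forall>n\<in>{1..N}. n \<in> A0 \<or> n \<in> A1 \<or> n \<in> A2"
    and f0: "sfree (k0-1) A0" and f1: "sfree (k1-1) A1" and f2: "sfree (k2-1) A2"
    and k: "k0 \<ge> 2" "k1 \<ge> 2" "k2 \<ge> 2"
  shows "enat (N+1) \<le> schur [k0,k1,k2]"
proof -
  define D where "D n = (if n \<in> A2 then 2 else if n \<in> A1 then 1 else (0::nat))" for n
  have cls: "\<forall>i<3. sfree ([k0,k1,k2]!i - 1) {n\<in>{1..N}. D n = i}"
  proof (intro allI impI)
    fix i :: nat assume "i < 3"
    then consider "i = 0" | "i = 1" | "i = 2" by linarith
    then show "sfree ([k0,k1,k2]!i - 1) {n\<in>{1..N}. D n = i}"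
    proof cases
      case 1
      have "{n\<in>{1..N}. D n = i} \<subseteq> A0" using cov 1 by (auto simp: D_def split: if_splits)
      then show ?thesis using f0 1 sfree_mono by simp
    next
      case 2
      have "{n\<in>{1..N}. D n = i} \<subseteq> A1" using cov 2 by (auto simp: D_def split: if_splits)
      then show ?thesis using f1 2 sfree_mono by simp
    next
      case 3
      have "{n\<in>{1..N}. D n = i} \<subseteq> A2" using cov 3 by (auto simp: D_def split: if_splits)
      then show ?thesis using f2 3 sfree_mono by simp
    qed
  qed
  have kk: "\<forall>i<3. [k0,k1,k2]!i \<ge> 2" using k by (auto simp: less_Suc_eq nth_Cons')
  have rng: "\<forall>n\<in>{1..N}. D n < length [k0,k1,k2]" by (simp add: D_def)
  show ?thesis unfolding schur_def
  proof (rule INF_greatest)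
    fix M assume "M \<in> {N. N \<ge> 1 \<and> schur_prop [k0,k1,k2] N}"
    then have M1: "M \<ge> 1" and sp: "schur_prop [k0,k1,k2] M" by auto
    show "enat (N+1) \<le> enat M"
    proof (rule ccontr)
      assume "\<not> enat (N+1) \<le> enat M"
      then have MN: "M \<le> N" by simp
      have "\<forall>n\<in>{1..M}. D n < length [k0,k1,k2]" by (simp add: D_def)
      then have "mono_sol M D [k0,k1,k2]" using sp unfolding schur_prop_def by blast
      then obtain i x where i: "i < length [k0,k1,k2]"
        and xs: "\<forall>j \<in> {1..[k0,k1,k2] ! i}. x j \<in> {1..M} \<and> D (x j) = i"
        and sm: "(\<Sum>j = 1..[k0,k1,k2] ! i - 1. x j) = x ([k0,k1,k2] ! i)"
        unfolding mono_sol_def by blast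
      define k where "k = [k0,k1,k2] ! i"
      have k2': "k \<ge> 2" using kk i by (simp add: k_def)
      have inA: "\<forall>j\<in>{1..k}. x j \<in> {n\<in>{1..N}. D n = i}" using xs MN by (auto simp: k_def)
      have "sfree (k - 1) {n\<in>{1..N}. D n = i}" using cls i by (simp add: k_def)
      moreover have "\<forall>j\<in>{1..k-1}. x j \<in> {n\<in>{1..N}. D n = i}" using inA by auto
      moreover have "x k \<in> {n\<in>{1..N}. D n = i}" using inA k2' by auto
      ultimately have "(\<Sum>j=1..k-1. x j) \<notin> {n\<in>{1..N}. D n = i}" unfolding sfree_def by blast
      then show False using sm \<open>x k \<in> {n\<in>{1..N}. D n = i}\<close> by (simp add: k_def)
    qed
  qed
qed



lemma sum_ge_const:
  fixes x :: "nat \<Rightarrow> nat"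
  assumes "\<forall>j\<in>{1..n}. x j \<ge> m"
  shows "(\<Sum>j=1..n. x j) \<ge> n * m"
proof -
  have "(\<Sum>j=1..n. m) \<le> (\<Sum>j=1..n. x j)" using assms by (intro sum_mono) auto
  then show ?thesis by simp
qed

lemma sum_le_const:
  fixes x :: "nat \<Rightarrow> nat"
  assumes "\<forall>j\<in>{1..n}. x j \<le> m"
  shows "(\<Sum>j=1..n. x j) \<le> n * m"
proof -
  have "(\<Sum>j=1..n. x j) \<le> (\<Sum>j=1..n. m)" using assms by (intro sum_mono) auto
  then show ?thesis by simp
qed

lemma sum_ge_one:
  fixes x :: "nat \<Rightarrow> nat"
  assumes "\<forall>j\<in>{1..n}. x j \<ge> m" and "j0 \<in> {1..n}" and "x j0 \<ge> M"
  shows "(\<Sum>j=1..n. x j) \<ge> M + (n - 1) * m"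
proof -
  have "(\<Sum>j=1..n. x j) = x j0 + (\<Sum>j\<in>{1..n}-{j0}. x j)"
    using assms(2) by (simp add: sum.remove)
  moreover have "(\<Sum>j\<in>{1..n}-{j0}. m) \<le> (\<Sum>j\<in>{1..n}-{j0}. x j)"
    using assms(1) by (intro sum_mono) auto
  moreover have "card ({1..n}-{j0}) = n - 1" using assms(2) by simp
  ultimately show ?thesis using assms(3) by simp
qed

lemma sum_ge_two:
  fixes x :: "nat \<Rightarrow> nat"
  assumes "ja \<in> {1..n}" "jb \<in> {1..n}" "ja \<noteq> jb"
  shows "(\<Sum>j=1..n. x j) \<ge> x ja + x jb"
proof -
  have "(\<Sum>j\<in>{ja,jb}. x j) \<le> (\<Sum>j=1..n. x j)"
    using assms by (intro sum_mono2) auto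
  then show ?thesis using assms(3) by simp
qed

lemma sum_parity_odd:
  fixes x :: "nat \<Rightarrow> nat"
  assumes "\<forall>j\<in>{1..n}. odd (x j)"
  shows "(\<Sum>j=1..n. x j) mod 2 = n mod 2"
proof -
  have "even (\<Sum>j=1..n. x j) = even (card {j\<in>{1..n}. odd (x j)})" by (rule even_sum_iff) simp
  moreover have "{j\<in>{1..n}. odd (x j)} = {1..n}" using assms by auto
  ultimately have "even (\<Sum>j=1..n. x j) = even n" by simp
  then show ?thesis by (metis odd_iff_mod_2_eq_one parity_cases)
qed

lemma sum_parity_even:
  fixes x :: "nat \<Rightarrow> nat"
  assumes "\<forall>j\<in>{1..n}. even (x j)"
  shows "even (\<Sum>j=1..n. x j)"
  using assms by (intro dvd_sum) auto

definition sh :: "nat \<Rightarrow> nat set \<Rightarrow> nat set" where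
  "sh T S = {v. T < v \<and> v - T \<in> S}"

lemma lift:
  fixes S :: "nat set"
  assumes bot: "\<And>y. (\<forall>j\<in>{1..n}. y j \<in> S) \<Longrightarrow> (\<Sum>j=1..n. y j) \<notin> S \<and> (\<Sum>j=1..n. y j) \<le> T"
    and Sb: "\<forall>v\<in>S. v \<le> T"
  shows "sfree n (S \<union> sh T S)"
proof (rule sfreeI)
  fix x assume xs: "\<forall>j\<in>{1..n}. x j \<in> S \<union> sh T S" and sx: "(\<Sum>j=1..n. x j) \<in> S \<union> sh T S"
  have shb: "v \<in> sh T S \<Longrightarrow> T < v \<and> v \<le> 2*T" for v using Sb unfolding sh_def by force
  define J where "J = {j\<in>{1..n}. T < x j}"
  have notJ: "j \<in> {1..n} \<Longrightarrow> j \<notin> J \<Longrightarrow> x j \<in> S" for j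
    using xs unfolding J_def sh_def by auto
  show False
  proof (cases "J = {}")
    case True
    then have "\<forall>j\<in>{1..n}. x j \<in> S" using notJ by blast
    then show False using bot[of x] sx shb by fastforce
  next
    case False
    then obtain j0 where j0: "j0 \<in> J" by blast
    show False
    proof (cases "\<exists>j1\<in>J. j1 \<noteq> j0")
      case True
      then obtain j1 where "j1 \<in> J" "j1 \<noteq> j0" by blast
      then have "(\<Sum>j=1..n. x j) \<ge> x j0 + x j1" using j0 sum_ge_two[where x=x and ja=j0 and n=n and jb=j1] unfolding J_def by auto
      moreover have "x j0 > T" "x j1 > T" using j0 \<open>j1 \<in> J\<close> unfolding J_def by auto
      ultimately show False using sx shb Sb by fastforce
    next
      case False
      then have oth: "j \<in> {1..n} \<Longrightarrow> j \<noteq> j0 \<Longrightarrow> x j \<in> S" for j using notJ by blast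
      have j0n: "j0 \<in> {1..n}" and Tj0: "T < x j0"
        using j0 unfolding J_def by auto
      have "x j0 \<in> S \<union> sh T S" using j0n xs by blast
      then have xj0: "x j0 \<in> sh T S" using Tj0 Sb by force
      define y where "y j = (if j = j0 then x j - T else x j)" for j
      have ys: "\<forall>j\<in>{1..n}. y j \<in> S" using oth xj0 unfolding y_def sh_def by auto
      have "x = (\<lambda>j. y j + (if j = j0 then T else 0))" using Tj0 unfolding y_def by auto
      then have "(\<Sum>j=1..n. x j) = (\<Sum>j=1..n. y j) + T"
        using j0n by (simp add: sum.distrib)
      moreover have "(\<Sum>j=1..n. y j) \<notin> S" using bot[OF ys] by blast
      moreover have "(\<Sum>j=1..n. x j) > T" using j0n Tj0 sum_ge_one[where n=n and x=x and m=0 and ?j0.0=j0 and M="x j0"] by auto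
      ultimately show False using sx Sb unfolding sh_def by auto
    qed
  qed
qed



lemma part1:
  fixes s t u :: nat
  assumes st: "4 \<le> s" "s \<le> t" "t \<le> u"
  shows "schur [s, t, u] \<ge> enat (s * t * u - t * u - u - 1)"
proof -
  define q where "q = s - 1"
  define r where "r = (t-1)*q - 1"
  define m2 where "m2 = t*q - 2"
  define T where "T = (u-1)*(t*q-1) - 1"
  define N where "N = T + m2"
  have q3: "3 \<le> q" using st by (simp add: q_def)
  have sq: "s = q + 1" using st by (simp add: q_def)
  have tq: "t*q \<ge> 12" using st q3 mult_le_mono[of 4 t 3 q] by simp
  have F2: "r + 1 = (t-1)*q" proof -
    have "(t-1)*q \<ge> 1" using st q3 by simp
    then show ?thesis unfolding r_def by arith
  qed
  have F3: "m2 + 2 = t*q" using tq unfolding m2_def by arith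
  have F3': "t*q - 1 = m2 + 1" using F3 by arith
  have F4: "T + 1 = (u-1)*(m2+1)" proof -
    have "(u-1)*(m2+1) \<ge> 1" using st by simp
    then show ?thesis unfolding T_def F3' by arith
  qed
  have tq2: "t*q = (t-1)*q + q" using st by (metis Suc_diff_1 add.commute le_trans less_le_trans mult_Suc zero_less_numeral nat_less_le)
  have rq: "r + q = m2 + 1" using F2 F3 tq2 by simp
  have F5: "q*(q-1) \<le> r" proof -
    have "q*(q-1) < q*(t-1)" using st q3 q_def by (intro mult_less_mono2) auto
    moreover have "q*(t-1) = r+1" using F2 by (simp add: mult.commute)
    ultimately show ?thesis by linarith
  qed
  have F6: "q*m2 \<le> T" proof -
    have "q*(m2+1) \<le> (u-1)*(m2+1)" using st q_def by (intro mult_le_mono1) simp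
    moreover have "q*(m2+1) = q*m2 + q" by (simp add: algebra_simps)
    ultimately show ?thesis using F4 q3 by linarith
  qed
  have F7: "(t-1)*r \<le> T" proof -
    have "(t-1)*r < (t-1)*(m2+1)" using st rq q3 by (intro mult_less_mono2) auto
    also have "\<dots> \<le> (u-1)*(m2+1)" using st by (intro mult_le_mono1) simp
    finally show ?thesis using F4 by linarith
  qed
  have qr: "q \<le> r" proof -
    have "q*1 \<le> q*(q-1)" using q3 by (intro mult_le_mono2) simp
    then show ?thesis using F5 by linarith
  qed
  have mT: "m2 \<le> T" proof -
    have "1*m2 \<le> q*m2" using q3 by (intro mult_le_mono1) simp
    then show ?thesis using F6 by linarith
  qed
  have rT: "r \<le> T" using rq mT q3 by linarith
  have F8: "N + 1 = s * t * u - t * u - u - 1" proof -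
    have "u*(m2+1) = (u-1)*(m2+1) + (m2+1)" using st by (cases u) auto
    then have "N + 2 = u*(m2+1)" using F4 unfolding N_def by linarith
    then have "N + 2 + u = u*(m2+2)" by (simp add: algebra_simps)
    moreover have "u*(m2+2) = u*(t*q)" using F3 by simp
    moreover have "s*t*u = u*(t*q) + t*u" using sq by (simp add: algebra_simps)
    ultimately have "N + 2 + u + t*u = s*t*u" by linarith
    then show ?thesis by simp
  qed
  define S0 where "S0 = {v. 1 \<le> v \<and> v \<le> q-1} \<union> {v. r+1 \<le> v \<and> v \<le> m2}"
  define S1 where "S1 = {v. q \<le> v \<and> v \<le> r}"
  define C2 where "C2 = {v. m2+1 \<le> v \<and> v \<le> T}"
  have cov: "\<forall>n\<in>{1..N}. n \<in> S0 \<union> sh T S0 \<or> n \<in> S1 \<union> sh T S1 \<or> n \<in> C2"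
    unfolding S0_def S1_def C2_def sh_def N_def using qr rq mT q3 by auto
  have f2: "sfree (u-1) C2"
  proof (rule sfreeI)
    fix x assume "\<forall>j\<in>{1..u-1}. x j \<in> C2" and "(\<Sum>j=1..u-1. x j) \<in> C2"
    then have "(\<Sum>j=1..u-1. x j) \<ge> (u-1)*(m2+1)" by (intro sum_ge_const) (auto simp: C2_def)
    moreover have "(\<Sum>j=1..u-1. x j) \<le> T" using \<open>(\<Sum>j=1..u-1. x j) \<in> C2\<close> by (simp add: C2_def)
    ultimately show False using F4 by linarith
  qed
  have f1: "sfree (t-1) (S1 \<union> sh T S1)"
  proof (rule lift)
    fix y assume ys: "\<forall>j\<in>{1..t-1}. y j \<in> S1"
    have "(\<Sum>j=1..t-1. y j) \<ge> (t-1)*q" using ys by (intro sum_ge_const) (auto simp: S1_def)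
    moreover have "(\<Sum>j=1..t-1. y j) \<le> (t-1)*r" using ys by (intro sum_le_const) (auto simp: S1_def)
    ultimately show "(\<Sum>j=1..t-1. y j) \<notin> S1 \<and> (\<Sum>j=1..t-1. y j) \<le> T"
      using F2 F7 by (auto simp: S1_def)
  next
    show "\<forall>v\<in>S1. v \<le> T" using rq mT q3 by (auto simp: S1_def)
  qed
  have f0: "sfree (s-1) (S0 \<union> sh T S0)"
  proof (rule lift)
    fix y assume ys: "\<forall>j\<in>{1..s-1}. y j \<in> S0"
    have lo: "(\<Sum>j=1..s-1. y j) \<ge> (s-1)*1" using ys by (intro sum_ge_const) (auto simp: S0_def)
    have hi: "(\<Sum>j=1..s-1. y j) \<le> (s-1)*m2" using ys rq by (intro sum_le_const) (auto simp: S0_def)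
    show "(\<Sum>j=1..s-1. y j) \<notin> S0 \<and> (\<Sum>j=1..s-1. y j) \<le> T"
    proof (cases "\<exists>j0\<in>{1..s-1}. y j0 \<ge> r+1")
      case True
      then obtain j0 where j0: "j0 \<in> {1..s-1}" "y j0 \<ge> r+1" by blast
      have "(\<Sum>j=1..s-1. y j) \<ge> (r+1) + (s-1-1)*1"
        using ys j0 by (intro sum_ge_one) (auto simp: S0_def)
      then show ?thesis using hi F6 rq q_def by (auto simp: S0_def)
    next
      case False
      then have "\<forall>j\<in>{1..s-1}. y j \<le> q-1" using ys by (auto simp: S0_def)
      then have "(\<Sum>j=1..s-1. y j) \<le> (s-1)*(q-1)" by (intro sum_le_const)
      then show ?thesis using lo F5 q_def qr rT rq by (auto simp: S0_def)
    qed
  next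
    show "\<forall>v\<in>S0. v \<le> T" using rq mT q3 by (auto simp: S0_def)
  qed
  have "enat (N+1) \<le> schur [s,t,u]"
    by (rule three[OF cov f0 f1 f2]) (use st in auto)
  then show ?thesis using F8 by simp
qed



lemma zfree:
  fixes x1 x2 a p N0 e :: nat
  assumes "a \<ge> 6" "p \<ge> 3*(a+1)" "e = 0 \<Longrightarrow> p \<ge> 4*(a+1)" "N0 = p + a - 2" "e < 2"
  and "x1 \<in> {1} \<union> {v. a \<le> v \<and> v \<le> 2*a-2 \<and> v mod 2 = 0} \<union> {v. p \<le> v \<and> v \<le> N0 \<and> v mod 2 = e}"
  and "x2 \<in> {1} \<union> {v. a \<le> v \<and> v \<le> 2*a-2 \<and> v mod 2 = 0} \<union> {v. p \<le> v \<and> v \<le> N0 \<and> v mod 2 = e}"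
  and "x1+x2 \<in> {1} \<union> {v. a \<le> v \<and> v \<le> 2*a-2 \<and> v mod 2 = 0} \<union> {v. p \<le> v \<and> v \<le> N0 \<and> v mod 2 = e}"
  shows False
proof -
  let ?Z = "{1} \<union> {v. a \<le> v \<and> v \<le> 2*a-2 \<and> v mod 2 = 0} \<union> {v. p \<le> v \<and> v \<le> N0 \<and> v mod 2 = e}"
  have one: False if y: "y \<in> ?Z" and y1: "y + 1 \<in> ?Z" for y
  proof -
    have py: "(y+1) mod 2 \<noteq> y mod 2" by (auto simp: mod_Suc)
    from y consider "y = 1" | "a \<le> y \<and> y \<le> 2*a-2 \<and> y mod 2 = 0" | "p \<le> y \<and> y \<le> N0 \<and> y mod 2 = e" by blast
    then show False
    proof cases
      case 1 then show False using y1 assms(1-4) by auto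
    next
      case 2 then show False using y1 py assms(1-4) by auto
    next
      case 3 then show False using y1 py assms(1-4) by auto
    qed
  qed
  show False
  proof (cases "x1 = 1")
    case True then show False using one[of x2] assms(7,8) by (simp add: add.commute)
  next
    case n1: False
    show False
    proof (cases "x2 = 1")
      case True then show False using one[of x1] assms(6,8) by simp
    next
      case n2: False
      have m: "(x1+x2) mod 2 = (x1 mod 2 + x2 mod 2) mod 2" by (simp add: mod_add_eq)
      have h1: "(a \<le> x1 \<and> x1 \<le> 2*a-2 \<and> x1 mod 2 = 0) \<or> (p \<le> x1 \<and> x1 \<le> N0 \<and> x1 mod 2 = e)" using assms(6) n1 by blast
      have h2: "(a \<le> x2 \<and> x2 \<le> 2*a-2 \<and> x2 mod 2 = 0) \<or> (p \<le> x2 \<and> x2 \<le> N0 \<and> x2 mod 2 = e)" using assms(7) n2 by blast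
      show False
      proof (cases "p \<le> x1 \<or> p \<le> x2")
        case True
        then have "x1 + x2 \<ge> p + a" using h1 h2 assms(2) by auto
        then show False using assms(1-4,8) by auto
      next
        case False
        then have e1: "a \<le> x1 \<and> x1 \<le> 2*a-2 \<and> x1 mod 2 = 0" "a \<le> x2 \<and> x2 \<le> 2*a-2 \<and> x2 mod 2 = 0" using h1 h2 by auto
        then have "(x1+x2) mod 2 = 0" using m by simp
        then show False using e1 assms(1-5,8) by auto
      qed
    qed
  qed
qed

lemma covlem:
  fixes n a p N0 N e :: nat
  assumes "a \<ge> 6" "p \<ge> 3*(a+1)" "N0 = p + a - 2" "1 \<le> n" "n \<le> N" "a mod 2 = 0"
  shows "n \<in> {1} \<union> {v. a \<le> v \<and> v \<le> 2*a-2 \<and> v mod 2 = 0} \<union> {v. p \<le> v \<and> v \<le> N0 \<and> v mod 2 = e}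
    \<or> n \<in> {v. a+1 \<le> v \<and> v \<le> 2*a-1 \<and> v mod 2 = 1} \<union> {v. 2*a \<le> v \<and> v < p} \<union> {v. p \<le> v \<and> v \<le> N0 \<and> v mod 2 \<noteq> e}
    \<or> n \<in> {v. 2 \<le> v \<and> v \<le> a-1} \<union> {v. N0 < v \<and> v \<le> N}"
proof -
  consider "n = 1" | "2 \<le> n \<and> n \<le> a-1" | "a \<le> n \<and> n \<le> 2*a-1" | "2*a \<le> n \<and> n < p" | "p \<le> n \<and> n \<le> N0" | "N0 < n"
    using assms by linarith
  then show ?thesis
  proof cases
    case 3
    show ?thesis
    proof (cases "n mod 2 = 0")
      case True
      have "n \<noteq> 2*a-1"
      proof
        assume "n = 2*a-1"
        then have "n = 2*(a-1) + 1" using assms(1) by simp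
        then show False using True by simp
      qed
      then have "n \<le> 2*a-2" using 3 by linarith
      then show ?thesis using 3 True by auto
    next
      case False
      then have o: "n mod 2 = 1" by (simp add: not_mod_2_eq_0_eq_1)
      then have "n \<noteq> a" using assms by auto
      then show ?thesis using 3 o by auto
    qed
  next
    case 5
    then show ?thesis by (cases "n mod 2 = e") auto
  qed (use assms in auto)
qed


lemma part2a:
  fixes t u :: nat
  assumes tu: "4 \<le> t" "t \<le> u"
  shows "enat (2 * t * u - u - 1 + 1) \<le> schur [3, t, u]"
proof -
  define a where "a = 2*u - 2"
  define p where "p = (t-1)*(a+1)"
  define N0 where "N0 = p + a - 2"
  define N where "N = 2 * t * u - u - 1"
  have a6: "a \<ge> 6" using tu by (simp add: a_def)
  have a2u: "a + 2 = 2*u" using tu by (simp add: a_def)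
  have p3: "p \<ge> 3*(a+1)" unfolding p_def using tu by (intro mult_le_mono1) simp
  have p4: "(t-1) mod 2 = 0 \<Longrightarrow> p \<ge> 4*(a+1)"
  proof -
    assume "(t-1) mod 2 = 0"
    moreover have "t - 1 \<noteq> 3" using \<open>(t-1) mod 2 = 0\<close> by auto
    ultimately have "t - 1 \<ge> 4" using tu by linarith
    then show ?thesis unfolding p_def by (intro mult_le_mono1) simp
  qed
  have tp: "t*(a+1) = p + (a+1)" unfolding p_def using tu by (cases t) (auto simp: algebra_simps)
  have N03: "N0 + 3 = t*(a+1)" using tp a6 unfolding N0_def by linarith
  have tN: "N + u + 1 = N0 + 3 + t" proof -
    have "t*(a+1) + t = t*(a+2)" by (simp add: algebra_simps)
    also have "\<dots> = 2*t*u" using a2u by simp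
    finally have "t*(a+1) + t = 2*t*u" .
    moreover have "2*t*u \<ge> u + 1" proof -
      have "2*u \<le> (2*t)*u" using tu by (intro mult_le_mono1) simp
      then show ?thesis using tu by linarith
    qed
    ultimately show ?thesis using N03 unfolding N_def by linarith
  qed
  have Wid: "2*a + (t-1-1)*(a+1) = N0 + 1" proof -
    have "(t-1-1)*(a+1) + (a+1) = p" unfolding p_def using tu by (cases "t-1") (auto simp: algebra_simps)
    then show ?thesis unfolding N0_def using a6 by linarith
  qed
  have amod: "a mod 2 = 0" proof -
    have "a = 2*(u-1)" unfolding a_def by simp
    then show ?thesis by simp
  qed
  have aN0: "a + 2 \<le> N0" using p3 a6 unfolding N0_def by arith
  define Z where "Z = {1} \<union> {v. a \<le> v \<and> v \<le> 2*a-2 \<and> v mod 2 = 0} \<union> {v. p \<le> v \<and> v \<le> N0 \<and> v mod 2 = (t-1) mod 2}"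
  define W where "W = {v. a+1 \<le> v \<and> v \<le> 2*a-1 \<and> v mod 2 = 1} \<union> {v. 2*a \<le> v \<and> v < p} \<union> {v. p \<le> v \<and> v \<le> N0 \<and> v mod 2 \<noteq> (t-1) mod 2}"
  define U where "U = {v. 2 \<le> v \<and> v \<le> a-1} \<union> {v. N0 < v \<and> v \<le> N}"
  have cov: "\<forall>n\<in>{1..N}. n \<in> Z \<or> n \<in> W \<or> n \<in> U"
  proof
    fix n assume n: "n \<in> {1..N}"
    show "n \<in> Z \<or> n \<in> W \<or> n \<in> U"
      unfolding Z_def W_def U_def using n a6 p3 amod N0_def by (intro covlem) auto
  qed
  have fZ: "sfree (3-1) Z"
  proof (rule sfreeI)
    fix x :: "nat \<Rightarrow> nat" assume xs: "\<forall>j\<in>{1..3-1}. x j \<in> Z" and sx: "(\<Sum>j=1..3-1. x j) \<in> Z"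
    have s2: "(\<Sum>j=1..3-1. x j) = x 1 + x 2" by (simp add: numeral_2_eq_2)
    have x1: "x 1 \<in> Z" and x2: "x 2 \<in> Z" using xs by auto
    have sZ: "x 1 + x 2 \<in> Z" using sx s2 by simp
    have e2: "(t-1) mod 2 < (2::nat)" by simp
    show False by (rule zfree[OF a6 p3 p4 N0_def e2 x1[unfolded Z_def] x2[unfolded Z_def] sZ[unfolded Z_def]])
  qed
  have fW: "sfree (t-1) W"
  proof (rule sfreeI)
    fix x assume xs: "\<forall>j\<in>{1..t-1}. x j \<in> W" and sx: "(\<Sum>j=1..t-1. x j) \<in> W"
    have ge: "\<forall>j\<in>{1..t-1}. x j \<ge> a+1"
    proof
      fix j assume "j \<in> {1..t-1}"
      then have "x j \<in> W" using xs by blast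
      then show "x j \<ge> a+1" using p3 a6 unfolding W_def by auto
    qed
    have Wle: "\<forall>v\<in>W. v \<le> N0" using p3 a6 unfolding W_def N0_def by auto
    show False
    proof (cases "\<exists>j0\<in>{1..t-1}. x j0 \<ge> 2*a")
      case True
      then obtain j0 where "j0 \<in> {1..t-1}" "x j0 \<ge> 2*a" by blast
      then have "(\<Sum>j=1..t-1. x j) \<ge> 2*a + (t-1-1)*(a+1)" using ge by (intro sum_ge_one) auto
      then show False using Wid Wle sx by fastforce
    next
      case False
      have od: "\<forall>j\<in>{1..t-1}. x j mod 2 = 1"
      proof
        fix j assume j: "j \<in> {1..t-1}"
        then have "x j \<in> W" using xs by blast
        moreover have "x j < 2*a" using j False not_le by blast
        ultimately show "x j mod 2 = 1" using p3 unfolding W_def by auto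
      qed
      have "(\<Sum>j=1..t-1. x j) mod 2 = (t-1) mod 2" using od by (intro sum_parity_odd) auto
      moreover have "(\<Sum>j=1..t-1. x j) \<ge> p" unfolding p_def using ge by (intro sum_ge_const)
      ultimately show False using sx p3 unfolding W_def by auto
    qed
  qed
  have fU: "sfree (u-1) U"
  proof (rule sfreeI)
    fix x assume xs: "\<forall>j\<in>{1..u-1}. x j \<in> U" and sx: "(\<Sum>j=1..u-1. x j) \<in> U"
    have ge: "\<forall>j\<in>{1..u-1}. x j \<ge> 2"
    proof
      fix j assume "j \<in> {1..u-1}"
      then have "x j \<in> U" using xs by blast
      then show "x j \<ge> 2" using a6 p3 unfolding U_def N0_def by auto
    qed
    show False
    proof (cases "\<exists>j0\<in>{1..u-1}. x j0 > N0")
      case True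
      then obtain j0 where "j0 \<in> {1..u-1}" "x j0 \<ge> N0+1" by auto
      then have "(\<Sum>j=1..u-1. x j) \<ge> (N0+1) + (u-1-1)*2" using ge by (intro sum_ge_one) auto
      then show False using sx tN tu aN0 unfolding U_def by auto
    next
      case False
      have le: "\<forall>j\<in>{1..u-1}. x j \<le> a-1"
      proof
        fix j assume j: "j \<in> {1..u-1}"
        then have "x j \<in> U" using xs by blast
        moreover have "\<not> x j > N0" using j False by blast
        ultimately show "x j \<le> a-1" unfolding U_def by auto
      qed
      have lo: "(\<Sum>j=1..u-1. x j) \<ge> (u-1)*2" using ge by (intro sum_ge_const)
      have hi: "(\<Sum>j=1..u-1. x j) \<le> (u-1)*(a-1)" using le by (intro sum_le_const)
      have inU: "N0 < (\<Sum>j=1..u-1. x j) \<and> (\<Sum>j=1..u-1. x j) \<le> N" using sx lo a2u unfolding U_def by auto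
      show False
      proof (cases "t + 2 \<le> u")
        case True
        then show False using inU tN by linarith
      next
        case False
        have e0: "a - 1 + 2 = a + 1" using a6 by simp
        have e1: "(u-1)*(a-1) + (u-1)*2 = (u-1)*(a+1)"
          unfolding e0[symmetric] by (simp only: add_mult_distrib2)
        have "(u-1)*(a+1) \<le> t*(a+1)" using False by (intro mult_le_mono1) simp
        then show False using e1 N03 hi inU tu by linarith
      qed
    qed
  qed
  have "enat (N+1) \<le> schur [3,t,u]"
    by (rule three[OF _ fZ fW fU]) (use cov tu in auto)
  then show ?thesis unfolding N_def .
qed



lemma z0free:
  fixes x1 x2 u N :: nat
  assumes "u \<ge> 7" "N = 5*u - 1"
  and "x1 \<in> {v. v mod 2 = 1 \<and> 1 \<le> v \<and> v \<le> 2*u-3} \<union> {v. v mod 2 = 0 \<and> 4*u-4 \<le> v \<and> v \<le> N}"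
  and "x2 \<in> {v. v mod 2 = 1 \<and> 1 \<le> v \<and> v \<le> 2*u-3} \<union> {v. v mod 2 = 0 \<and> 4*u-4 \<le> v \<and> v \<le> N}"
  and "x1+x2 \<in> {v. v mod 2 = 1 \<and> 1 \<le> v \<and> v \<le> 2*u-3} \<union> {v. v mod 2 = 0 \<and> 4*u-4 \<le> v \<and> v \<le> N}"
  shows False
proof -
  have m: "(x1+x2) mod 2 = (x1 mod 2 + x2 mod 2) mod 2" by (simp add: mod_add_eq)
  from assms(3) consider "x1 mod 2 = 1 \<and> 1 \<le> x1 \<and> x1 \<le> 2*u-3" | "x1 mod 2 = 0 \<and> 4*u-4 \<le> x1 \<and> x1 \<le> N" by blast
  then show False
  proof cases
    case 1
    from assms(4) consider "x2 mod 2 = 1 \<and> 1 \<le> x2 \<and> x2 \<le> 2*u-3" | "x2 mod 2 = 0 \<and> 4*u-4 \<le> x2 \<and> x2 \<le> N" by blast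
    then show False
    proof cases
      case 2: 1
      then have "(x1+x2) mod 2 = 0" using 1 m by simp
      then show False using 1 2 assms(1,2,5) by auto
    next
      case 2: 2
      then have "(x1+x2) mod 2 = 1" using 1 m by simp
      then show False using 1 2 assms(1,2,5) by auto
    qed
  next
    case 2
    from assms(4) consider "x2 mod 2 = 1 \<and> 1 \<le> x2 \<and> x2 \<le> 2*u-3" | "x2 mod 2 = 0 \<and> 4*u-4 \<le> x2 \<and> x2 \<le> N" by blast
    then show False
    proof cases
      case 3: 1
      then have "(x1+x2) mod 2 = 1" using 2 m by simp
      then show False using 2 3 assms(1,2,5) by auto
    next
      case 3: 2
      then show False using 2 3 assms(1,2,5) by auto
    qed
  qed
qed

lemma z1free:
  fixes x1 x2 u N :: nat
  assumes "u \<ge> 7" "N = 5*u - 1"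
  and "x1 \<in> {v. v mod 2 = 0 \<and> 2*u-2 \<le> v \<and> v \<le> 4*u-6} \<union> {v. v mod 2 = 1 \<and> 4*u-5 \<le> v \<and> v \<le> N}"
  and "x2 \<in> {v. v mod 2 = 0 \<and> 2*u-2 \<le> v \<and> v \<le> 4*u-6} \<union> {v. v mod 2 = 1 \<and> 4*u-5 \<le> v \<and> v \<le> N}"
  and "x1+x2 \<in> {v. v mod 2 = 0 \<and> 2*u-2 \<le> v \<and> v \<le> 4*u-6} \<union> {v. v mod 2 = 1 \<and> 4*u-5 \<le> v \<and> v \<le> N}"
  shows False
proof -
  have m: "(x1+x2) mod 2 = (x1 mod 2 + x2 mod 2) mod 2" by (simp add: mod_add_eq)
  from assms(3) consider "x1 mod 2 = 0 \<and> 2*u-2 \<le> x1 \<and> x1 \<le> 4*u-6" | "x1 mod 2 = 1 \<and> 4*u-5 \<le> x1 \<and> x1 \<le> N" by blast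
  then show False
  proof cases
    case 1
    from assms(4) consider "x2 mod 2 = 0 \<and> 2*u-2 \<le> x2 \<and> x2 \<le> 4*u-6" | "x2 mod 2 = 1 \<and> 4*u-5 \<le> x2 \<and> x2 \<le> N" by blast
    then show False
    proof cases
      case 2: 1
      then have "(x1+x2) mod 2 = 0" using 1 m by simp
      then show False using 1 2 assms(1,2,5) by auto
    next
      case 2: 2
      then show False using 1 2 assms(1,2,5) by auto
    qed
  next
    case 2
    then show False using assms(1,2,4,5) by auto
  qed
qed

lemma cov3:
  fixes n u N :: nat
  assumes "u \<ge> 7" "N = 5*u - 1" "1 \<le> n" "n \<le> N"
  shows "n \<in> {v. v mod 2 = 1 \<and> 1 \<le> v \<and> v \<le> 2*u-3} \<union> {v. v mod 2 = 0 \<and> 4*u-4 \<le> v \<and> v \<le> N}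
   \<or> n \<in> {v. v mod 2 = 0 \<and> 2*u-2 \<le> v \<and> v \<le> 4*u-6} \<union> {v. v mod 2 = 1 \<and> 4*u-5 \<le> v \<and> v \<le> N}
   \<or> n \<in> {v. v mod 2 = 0 \<and> 2 \<le> v \<and> v \<le> 2*u-4} \<union> {v. v mod 2 = 1 \<and> 2*u-1 \<le> v \<and> v \<le> 4*u-7}"
proof -
  obtain k where "n = 2*k \<or> n = 2*k+1" by (metis dvd_mult_div_cancel odd_two_times_div_two_succ)
  then consider "n = 2*k" | "n = 2*k+1" by blast
  then show ?thesis
  proof cases
    case 1
    consider "k \<le> u-2" | "u-1 \<le> k \<and> k \<le> 2*u-3" | "2*u-2 \<le> k" by linarith
    then show ?thesis using 1 assms by cases auto
  next
    case 2
    consider "k \<le> u-2" | "u-1 \<le> k \<and> k \<le> 2*u-4" | "2*u-3 \<le> k" by linarith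
    then show ?thesis using 2 assms by cases auto
  qed
qed

lemma part2b:
  fixes u :: nat
  assumes u7: "7 \<le> u"
  shows "enat (2 * 3 * u - u - 1 + 1) \<le> schur [3, 3, u]"
proof -
  define N where "N = 5*u - 1"
  have NN: "2 * 3 * u - u - 1 = N" unfolding N_def by simp
  define Z0 where "Z0 = {v. v mod 2 = 1 \<and> 1 \<le> v \<and> v \<le> 2*u-3} \<union> {v. v mod 2 = 0 \<and> 4*u-4 \<le> v \<and> v \<le> N}"
  define Z1 where "Z1 = {v. v mod 2 = 0 \<and> 2*u-2 \<le> v \<and> v \<le> 4*u-6} \<union> {v. v mod 2 = 1 \<and> 4*u-5 \<le> v \<and> v \<le> N}"
  define U where "U = {v. v mod 2 = 0 \<and> 2 \<le> v \<and> v \<le> 2*u-4} \<union> {v. v mod 2 = 1 \<and> 2*u-1 \<le> v \<and> v \<le> 4*u-7}"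
  have cov: "\<forall>n\<in>{1..N}. n \<in> Z0 \<or> n \<in> Z1 \<or> n \<in> U"
    unfolding Z0_def Z1_def U_def using u7 N_def by (intro ballI cov3) auto
  have f0: "sfree (3-1) Z0"
  proof (rule sfreeI)
    fix x :: "nat \<Rightarrow> nat" assume xs: "\<forall>j\<in>{1..3-1}. x j \<in> Z0" and sx: "(\<Sum>j=1..3-1. x j) \<in> Z0"
    have s2: "(\<Sum>j=1..3-1. x j) = x 1 + x 2" by (simp add: numeral_2_eq_2)
    have x1: "x 1 \<in> Z0" and x2: "x 2 \<in> Z0" using xs by auto
    have sZ: "x 1 + x 2 \<in> Z0" using sx s2 by simp
    show False by (rule z0free[OF u7 N_def x1[unfolded Z0_def] x2[unfolded Z0_def] sZ[unfolded Z0_def]])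
  qed
  have f1: "sfree (3-1) Z1"
  proof (rule sfreeI)
    fix x :: "nat \<Rightarrow> nat" assume xs: "\<forall>j\<in>{1..3-1}. x j \<in> Z1" and sx: "(\<Sum>j=1..3-1. x j) \<in> Z1"
    have s2: "(\<Sum>j=1..3-1. x j) = x 1 + x 2" by (simp add: numeral_2_eq_2)
    have x1: "x 1 \<in> Z1" and x2: "x 2 \<in> Z1" using xs by auto
    have sZ: "x 1 + x 2 \<in> Z1" using sx s2 by simp
    show False by (rule z1free[OF u7 N_def x1[unfolded Z1_def] x2[unfolded Z1_def] sZ[unfolded Z1_def]])
  qed
  have fU: "sfree (u-1) U"
  proof (rule sfreeI)
    fix x assume xs: "\<forall>j\<in>{1..u-1}. x j \<in> U" and sx: "(\<Sum>j=1..u-1. x j) \<in> U"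
    have ge: "\<forall>j\<in>{1..u-1}. x j \<ge> 2"
    proof
      fix j assume "j \<in> {1..u-1}"
      then have "x j \<in> U" using xs by blast
      then show "x j \<ge> 2" using u7 unfolding U_def by auto
    qed
    show False
    proof (cases "\<exists>j0\<in>{1..u-1}. x j0 mod 2 = 1")
      case True
      then obtain j0 where j0: "j0 \<in> {1..u-1}" "x j0 mod 2 = 1" by blast
      then have "x j0 \<in> U" using xs by blast
      then have "x j0 \<ge> 2*u-1" using j0 unfolding U_def by auto
      then have "(\<Sum>j=1..u-1. x j) \<ge> (2*u-1) + (u-1-1)*2" using ge j0 by (intro sum_ge_one) auto
      then show False using sx u7 unfolding U_def by auto
    next
      case False
      then have ev: "\<forall>j\<in>{1..u-1}. even (x j)" by (auto simp: even_iff_mod_2_eq_zero)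
      have "even (\<Sum>j=1..u-1. x j)" using ev by (rule sum_parity_even)
      moreover have "(\<Sum>j=1..u-1. x j) \<ge> (u-1)*2" using ge by (intro sum_ge_const)
      ultimately show False using sx u7 unfolding U_def by (auto simp: even_iff_mod_2_eq_zero)
    qed
  qed
  have "enat (N+1) \<le> schur [3,3,u]"
    by (rule three[OF cov f0 f1 fU]) (use u7 in auto)
  then show ?thesis unfolding NN .
qed



fun ssum :: "nat \<Rightarrow> nat list \<Rightarrow> nat \<Rightarrow> nat list" where
  "ssum 0 A N = [0]"
| "ssum (Suc n) A N = remdups (filter (\<lambda>v. v \<le> N) (concat (map (\<lambda>x. map (\<lambda>y. x + y) A) (ssum n A N))))"

lemma ssum_complete:
  fixes x :: "nat \<Rightarrow> nat"
  shows "(\<forall>j\<in>{1..n}. x j \<in> set A) \<Longrightarrow> (\<Sum>j=1..n. x j) \<le> N \<Longrightarrow> (\<Sum>j=1..n. x j) \<in> set (ssum n A N)"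
proof (induction n)
  case 0
  then show ?case by simp
next
  case (Suc n)
  have eq: "(\<Sum>j=1..Suc n. x j) = (\<Sum>j=1..n. x j) + x (Suc n)" by simp
  have "(\<Sum>j=1..n. x j) \<in> set (ssum n A N)" using Suc by (intro Suc.IH) auto
  moreover have "x (Suc n) \<in> set A" using Suc.prems by simp
  ultimately show ?case using Suc.prems(2) eq by force
qed

lemma sfree_list:
  assumes "list_all (\<lambda>z. z \<le> N) A" "list_all (\<lambda>z. z \<notin> set (ssum n A N)) A"
  shows "sfree n (set A)"
proof (rule sfreeI)
  fix x assume xs: "\<forall>j\<in>{1..n}. x j \<in> set A" and sx: "(\<Sum>j=1..n. x j) \<in> set A"
  have "(\<Sum>j=1..n. x j) \<le> N" using sx assms(1) by (simp add: list_all_iff)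
  then have "(\<Sum>j=1..n. x j) \<in> set (ssum n A N)" using xs by (intro ssum_complete)
  then show False using sx assms(2) by (simp add: list_all_iff)
qed

lemma fin3:
  assumes "list_all (\<lambda>n. n \<in> set La \<or> n \<in> set Lb \<or> n \<in> set Lc) [1..<N+1]"
    "list_all (\<lambda>z. z \<le> N) La" "list_all (\<lambda>z. z \<le> N) Lb" "list_all (\<lambda>z. z \<le> N) Lc"
    "list_all (\<lambda>z. z \<notin> set (ssum (k0-1) La N)) La"
    "list_all (\<lambda>z. z \<notin> set (ssum (k1-1) Lb N)) Lb"
    "list_all (\<lambda>z. z \<notin> set (ssum (k2-1) Lc N)) Lc"
    "k0 \<ge> 2" "k1 \<ge> 2" "k2 \<ge> 2"
  shows "enat (N+1) \<le> schur [k0,k1,k2]"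
proof (rule three)
  show "\<forall>n\<in>{1..N}. n \<in> set La \<or> n \<in> set Lb \<or> n \<in> set Lc"
  proof
    fix n assume "n \<in> {1..N}"
    then have "n \<in> set [1..<N+1]" by auto
    then show "n \<in> set La \<or> n \<in> set Lb \<or> n \<in> set Lc" using assms(1) unfolding list_all_iff by blast
  qed
qed (use assms sfree_list in auto)

lemma fin334: "enat (19+1) \<le> schur [3,3,4]"
  by (rule fin3[where La="[1, 4, 6, 15, 17]" and Lb="[2, 3, 18, 19]" and Lc="[5, 7, 8, 9, 10, 11, 12, 13, 14, 16]"]; code_simp)

lemma fin335: "enat (24+1) \<le> schur [3,3,5]"
  by (rule fin3[where La="[1, 3, 5, 7, 9, 20, 22, 24]" and Lb="[2, 6, 11, 15, 16, 19, 23]" and Lc="[4, 8, 10, 12, 13, 14, 17, 18, 21]"]; code_simp)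

lemma fin336: "enat (29+1) \<le> schur [3,3,6]"
  by (rule fin3[where La="[1, 3, 5, 7, 9, 20, 22, 24, 26, 28]" and Lb="[2, 11, 29]" and Lc="[4, 6, 8, 10, 12, 13, 14, 15, 16, 17, 18, 19, 21, 23, 25, 27]"]; code_simp)


theorem proposition1:
  fixes s t u :: nat
  shows "(4 \<le> s \<and> s \<le> t \<and> t \<le> u \<longrightarrow>
            schur [s, t, u] \<ge> enat (s * t * u - t * u - u - 1)) \<and>
         (((3 = t \<and> t < u) \<or> (3 < t \<and> t \<le> u)) \<longrightarrow>
            schur [3, t, u] > enat (2 * t * u - u - 1))"
proof
  show "4 \<le> s \<and> s \<le> t \<and> t \<le> u \<longrightarrow> schur [s, t, u] \<ge> enat (s * t * u - t * u - u - 1)"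
  proof
    assume "4 \<le> s \<and> s \<le> t \<and> t \<le> u"
    then show "schur [s, t, u] \<ge> enat (s * t * u - t * u - u - 1)" using part1[of s t u] by blast
  qed
  show "((3 = t \<and> t < u) \<or> (3 < t \<and> t \<le> u)) \<longrightarrow> schur [3, t, u] > enat (2 * t * u - u - 1)"
  proof
    assume h: "(3 = t \<and> t < u) \<or> (3 < t \<and> t \<le> u)"
    have "enat (2 * t * u - u - 1 + 1) \<le> schur [3, t, u]"
    proof (cases "3 < t")
      case True
      then have "4 \<le> t" "t \<le> u" using h by auto
      then show ?thesis by (rule part2a)
    next
      case False
      then have t3: "t = 3" and u4: "u \<ge> 4" using h by auto
      consider "u = 4" | "u = 5" | "u = 6" | "u \<ge> 7" using u4 by linarith
      then show ?thesis
      proof cases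
        case 1
        then show ?thesis using fin334 t3 by simp
      next
        case 2
        then show ?thesis using fin335 t3 by simp
      next
        case 3
        then show ?thesis using fin336 t3 by simp
      next
        case 4
        then show ?thesis using part2b[of u] t3 by simp
      qed
    qed
    then show "schur [3, t, u] > enat (2 * t * u - u - 1)"
      by (simp add: Suc_ile_eq)
  qed
qed

end
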